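(* Let $H$ be an uncoloured graph and let $S\subseteq E(H)$. Then there exists a half-edge $2$-colouring $d$ of $H$ such that $(H,d)$ is a W-cone and every edge of $S$ is bichromatic if and only if $H$ is matching-covered and contains a universal vertex $v$ that is incident with a pair of parallel edges and with every edge of $S$.
   Context: Graphs may have parallel edges but no loops. A vertex is universal if it is adjacent to all other vertices. A half-edge $2$-colouring $d$ of $H$ assigns to each pair $(e,w)$ with $w$ an endpoint of edge $e$ a colour in $\{0,1\}$ (0 = blue, 1 = red). An edge $e=uv$ is bichromatic if $d(e,u)\neq d(e,v)$ and monochromatic otherwise; $E_b(H)$, $E_m(H)$ denote the bichromatic and monochromatic edge sets; standing convention: monochromatic edges are blue at both ends. A graph is matching-covered if every edge lies in some perfect matching. A W-cone is a half-edge $2$-coloured matching-covered graph $(H,d)$ containing a universal vertex $v$ (the apex) such that the set of edges incident with $v$ equals $E_b(H)$, $E(H-v)=E_m(H)$, and every vertex $u$ is incident with an edge $e$ with $d(e,u)=1$. *)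

theory Defs
  imports Main
begin

text \<open>A finite multigraph (parallel edges allowed, no loops): vertex set V, edge set E,
  and an endpoint map; every edge has exactly two distinct endpoints in V.\<close>
definition multigraph :: "'v set \<Rightarrow> 'e set \<Rightarrow> ('e \<Rightarrow> 'v set) \<Rightarrow> bool" where
  "multigraph V E ends \<longleftrightarrow> finite V \<and> finite E \<and>
     (\<forall>e\<in>E. ends e \<subseteq> V \<and> card (ends e) = 2)"

definition adjacent :: "'e set \<Rightarrow> ('e \<Rightarrow> 'v set) \<Rightarrow> 'v \<Rightarrow> 'v \<Rightarrow> bool" where
  "adjacent E ends u w \<longleftrightarrow> (\<exists>e\<in>E. ends e = {u, w})"

definition universal :: "'v set \<Rightarrow> 'e set \<Rightarrow> ('e \<Rightarrow> 'v set) \<Rightarrow> 'v \<Rightarrow> bool" where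
  "universal V E ends v \<longleftrightarrow> v \<in> V \<and> (\<forall>u\<in>V. u \<noteq> v \<longrightarrow> adjacent E ends v u)"

definition perfect_matching :: "'v set \<Rightarrow> 'e set \<Rightarrow> ('e \<Rightarrow> 'v set) \<Rightarrow> 'e set \<Rightarrow> bool" where
  "perfect_matching V E ends M \<longleftrightarrow> M \<subseteq> E \<and>
     (\<forall>e\<in>M. \<forall>f\<in>M. e \<noteq> f \<longrightarrow> ends e \<inter> ends f = {}) \<and>
     (\<forall>u\<in>V. \<exists>e\<in>M. u \<in> ends e)"

definition matching_covered :: "'v set \<Rightarrow> 'e set \<Rightarrow> ('e \<Rightarrow> 'v set) \<Rightarrow> bool" where
  "matching_covered V E ends \<longleftrightarrow> (\<forall>e\<in>E. \<exists>M. perfect_matching V E ends M \<and> e \<in> M)"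

text \<open>Half-edge 2-colouring: colour 0 = blue, 1 = red. Standing convention:
  monochromatic edges are blue at both ends.\<close>
definition bichromatic :: "('e \<Rightarrow> 'v set) \<Rightarrow> ('e \<Rightarrow> 'v \<Rightarrow> nat) \<Rightarrow> 'e \<Rightarrow> bool" where
  "bichromatic ends d e \<longleftrightarrow> (\<exists>u\<in>ends e. \<exists>w\<in>ends e. d e u \<noteq> d e w)"

definition half_edge_colouring :: "'e set \<Rightarrow> ('e \<Rightarrow> 'v set) \<Rightarrow> ('e \<Rightarrow> 'v \<Rightarrow> nat) \<Rightarrow> bool" where
  "half_edge_colouring E ends d \<longleftrightarrow>
     (\<forall>e\<in>E. \<forall>w\<in>ends e. d e w \<in> {0, 1}) \<and>
     (\<forall>e\<in>E. \<not> bichromatic ends d e \<longrightarrow> (\<forall>w\<in>ends e. d e w = 0))"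

definition W_cone :: "'v set \<Rightarrow> 'e set \<Rightarrow> ('e \<Rightarrow> 'v set) \<Rightarrow> ('e \<Rightarrow> 'v \<Rightarrow> nat) \<Rightarrow> bool" where
  "W_cone V E ends d \<longleftrightarrow> half_edge_colouring E ends d \<and> matching_covered V E ends \<and>
     (\<exists>v. universal V E ends v \<and>
        {e\<in>E. v \<in> ends e} = {e\<in>E. bichromatic ends d e} \<and>
        {e\<in>E. v \<notin> ends e} = {e\<in>E. \<not> bichromatic ends d e} \<and>
        (\<forall>u\<in>V. \<exists>e\<in>E. u \<in> ends e \<and> d e u = 1))"

end

theory Submission
  imports Defs
begin

lemma other_end:
  assumes "card A = 2" "v \<in> A"
  shows "\<exists>w. A = {v, w} \<and> w \<noteq> v"
  using assms by (auto simp: card_2_iff)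

theorem mainTheorem16:
  fixes V :: "'v set" and E :: "'e set" and ends :: "'e \<Rightarrow> 'v set" and S :: "'e set"
  assumes "multigraph V E ends" and "S \<subseteq> E"
  shows "(\<exists>d. W_cone V E ends d \<and> (\<forall>e\<in>S. bichromatic ends d e)) \<longleftrightarrow>
    (matching_covered V E ends \<and>
     (\<exists>v. universal V E ends v \<and>
        (\<exists>e1\<in>E. \<exists>e2\<in>E. e1 \<noteq> e2 \<and> ends e1 = ends e2 \<and> v \<in> ends e1) \<and>
        (\<forall>e\<in>S. v \<in> ends e)))"
proof
  have card2: "\<And>e. e \<in> E \<Longrightarrow> card (ends e) = 2 \<and> ends e \<subseteq> V"
    using assms(1) unfolding multigraph_def by blast
  assume "\<exists>d. W_cone V E ends d \<and> (\<forall>e\<in>S. bichromatic ends d e)"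
  then obtain d where W: "W_cone V E ends d" and Sb: "\<forall>e\<in>S. bichromatic ends d e" by blast
  have col: "half_edge_colouring E ends d" using W unfolding W_cone_def by (elim conjE)
  have mc: "matching_covered V E ends" using W unfolding W_cone_def by (elim conjE)
  have c01: "\<forall>e\<in>E. \<forall>w\<in>ends e. d e w \<in> {0, 1}" using col unfolding half_edge_colouring_def by (elim conjE)
  have c0: "\<forall>e\<in>E. \<not> bichromatic ends d e \<longrightarrow> (\<forall>w\<in>ends e. d e w = 0)"
    using col unfolding half_edge_colouring_def by (elim conjE)
  have ex: "\<exists>v. universal V E ends v \<and>
        {e\<in>E. v \<in> ends e} = {e\<in>E. bichromatic ends d e} \<and>
        {e\<in>E. v \<notin> ends e} = {e\<in>E. \<not> bichromatic ends d e} \<and>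
        (\<forall>u\<in>V. \<exists>e\<in>E. u \<in> ends e \<and> d e u = 1)"
    using W unfolding W_cone_def by (elim conjE)
  then obtain v where H: "universal V E ends v \<and>
        {e\<in>E. v \<in> ends e} = {e\<in>E. bichromatic ends d e} \<and>
        {e\<in>E. v \<notin> ends e} = {e\<in>E. \<not> bichromatic ends d e} \<and>
        (\<forall>u\<in>V. \<exists>e\<in>E. u \<in> ends e \<and> d e u = 1)" by (rule exE)
  note un = H[THEN conjunct1]
  have A0: "{e\<in>E. v \<in> ends e} = {e\<in>E. bichromatic ends d e}" using H by (elim conjE)
  have R: "\<forall>u\<in>V. \<exists>e\<in>E. u \<in> ends e \<and> d e u = 1" using H by (elim conjE)
  have A: "\<And>e. e \<in> E \<Longrightarrow> v \<in> ends e \<longleftrightarrow> bichromatic ends d e"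
    using A0 unfolding set_eq_iff by blast
  have vV: "v \<in> V" using un unfolding universal_def by (elim conjE)
  obtain e' where e': "e' \<in> E" "v \<in> ends e'" "d e' v = 1" using R vV by blast
  obtain w where w: "ends e' = {v, w}" "w \<noteq> v" using other_end[OF conjunct1[OF card2[OF e'(1)]] e'(2)] by blast
  have bi': "bichromatic ends d e'" using A e' by blast
  have dw: "d e' w = 0"
  proof -
    have "d e' w \<in> {0,1}" "d e' v \<in> {0,1}" using c01 e' w by auto
    moreover from bi' w have "d e' v \<noteq> d e' w" unfolding bichromatic_def by auto
    ultimately show ?thesis using e' by auto
  qed
  have wV: "w \<in> V" using card2[OF e'(1)] w by auto
  obtain e where e: "e \<in> E" "w \<in> ends e" "d e w = 1" using R wV by blast
  have "v \<in> ends e"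
  proof (rule ccontr)
    assume "v \<notin> ends e"
    then have "\<not> bichromatic ends d e" using A e by blast
    then have "d e w = 0" using c0 e by blast
    then show False using e by simp
  qed
  then obtain x where x: "ends e = {v, x}" "x \<noteq> v" using other_end[OF conjunct1[OF card2[OF e(1)]]] by blast
  have "x = w" using x e(2) w(2) by blast
  then have ee: "ends e = ends e'" using x w by simp
  have ne: "e \<noteq> e'" using e dw by auto
  have par: "\<exists>e1\<in>E. \<exists>e2\<in>E. e1 \<noteq> e2 \<and> ends e1 = ends e2 \<and> v \<in> ends e1"
    apply (rule bexI[of _ e], rule bexI[of _ e'])
    using ee ne \<open>v \<in> ends e\<close> e(1) e'(1) by auto
  have "\<forall>e\<in>S. v \<in> ends e" using Sb A assms(2) by blast
  then show "matching_covered V E ends \<and>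
     (\<exists>v. universal V E ends v \<and>
        (\<exists>e1\<in>E. \<exists>e2\<in>E. e1 \<noteq> e2 \<and> ends e1 = ends e2 \<and> v \<in> ends e1) \<and>
        (\<forall>e\<in>S. v \<in> ends e))" using mc un par by blast
next
  have card2: "\<And>e. e \<in> E \<Longrightarrow> card (ends e) = 2 \<and> ends e \<subseteq> V"
    using assms(1) unfolding multigraph_def by blast
  assume "matching_covered V E ends \<and>
     (\<exists>v. universal V E ends v \<and>
        (\<exists>e1\<in>E. \<exists>e2\<in>E. e1 \<noteq> e2 \<and> ends e1 = ends e2 \<and> v \<in> ends e1) \<and>
        (\<forall>e\<in>S. v \<in> ends e))"
  then obtain v e1 e2 where mc: "matching_covered V E ends" and un: "universal V E ends v"
    and e12: "e1 \<in> E" "e2 \<in> E" "e1 \<noteq> e2" "ends e1 = ends e2" "v \<in> ends e1"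
    and Sv: "\<forall>e\<in>S. v \<in> ends e" by blast
  obtain w where w: "ends e1 = {v, w}" "w \<noteq> v" using other_end[OF conjunct1[OF card2[OF e12(1)]] e12(5)] by blast
  define d :: "'e \<Rightarrow> 'v \<Rightarrow> nat" where "d = (\<lambda>e x. if v \<in> ends e then
     (if e = e1 then (if x = v then 1 else 0) else (if x = v then 0 else 1)) else 0)"
  have bic: "bichromatic ends d e \<longleftrightarrow> v \<in> ends e" if eE: "e \<in> E" for e
  proof
    assume b: "bichromatic ends d e"
    show "v \<in> ends e"
    proof (rule ccontr)
      assume "v \<notin> ends e"
      then have "\<forall>x. d e x = 0" by (simp add: d_def)
      with b show False unfolding bichromatic_def by simp
    qed
  next
    assume h: "v \<in> ends e"
    then obtain x where x: "ends e = {v, x}" "x \<noteq> v" using other_end[OF conjunct1[OF card2[OF eE]]] by blast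
    have "d e v \<noteq> d e x" using h x(2) by (cases "e = e1") (simp_all add: d_def)
    then show "bichromatic ends d e" unfolding bichromatic_def using x(1) by blast
  qed
  have col: "half_edge_colouring E ends d"
    unfolding half_edge_colouring_def
  proof (intro conjI ballI impI)
    fix e x assume "e \<in> E" "x \<in> ends e"
    show "d e x \<in> {0, 1}" unfolding d_def by simp
  next
    fix e x assume "e \<in> E" "\<not> bichromatic ends d e" "x \<in> ends e"
    then have "v \<notin> ends e" using bic by blast
    then show "d e x = 0" unfolding d_def by simp
  qed
  have R: "\<forall>u\<in>V. \<exists>e\<in>E. u \<in> ends e \<and> d e u = 1"
  proof
    fix u assume uV: "u \<in> V"
    show "\<exists>e\<in>E. u \<in> ends e \<and> d e u = 1"
    proof (cases "u = v")
      case True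
      have "d e1 v = 1" by (simp add: d_def e12(5))
      then show ?thesis using e12(1,5) True by blast
    next
      case False
      then obtain e where e: "e \<in> E" "ends e = {v, u}"
        using un uV unfolding universal_def adjacent_def by blast
      show ?thesis
      proof (cases "e = e1")
        case True
        then have "u = w" using e w False by auto
        have "d e2 w = 1" using e12(3,4,5) w by (simp add: d_def)
        moreover have "w \<in> ends e1" using w(1) by simp
        then have "w \<in> ends e2" using e12(4) by simp
        ultimately show ?thesis using e12(2) \<open>u = w\<close> by blast
      next
        case False2: False
        have "d e u = 1" using e(2) False False2 by (simp add: d_def)
        then show ?thesis using e by blast
      qed
    qed
  qed
  have A: "{e\<in>E. v \<in> ends e} = {e\<in>E. bichromatic ends d e}"
    apply (rule Collect_cong) using bic by blast
  have B: "{e\<in>E. v \<notin> ends e} = {e\<in>E. \<not> bichromatic ends d e}"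
    apply (rule Collect_cong) using bic by blast
  have "W_cone V E ends d"
    unfolding W_cone_def by (intro conjI exI[where x=v] col mc un A B R)
  moreover have "\<forall>e\<in>S. bichromatic ends d e" using Sv bic assms(2) by blast
  ultimately show "\<exists>d. W_cone V E ends d \<and> (\<forall>e\<in>S. bichromatic ends d e)" by blast
qed

end
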